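(* Let $D\ge1$, let $Q_D$ be the $D$-dimensional hypercube on $X=\{0,1\}^D$ with adjacency matrix $A$. For $1\le i<j\le D$ put $B_{ij}=\alpha^*_iA\alpha^*_j-\alpha^*_jA\alpha^*_i$. Then for every $S\subseteq\{1,\ldots,D\}$, $$B_{ij}w_S=\begin{cases}-4\,w_{(S\cup\{j\})\setminus\{i\}} & \text{if } i\in S,\ j\notin S,\\ 4\,w_{(S\cup\{i\})\setminus\{j\}} & \text{if } i\notin S,\ j\in S,\\ 0&\text{otherwise.}\end{cases}$$
   Context: $Q_D$ is the graph with vertex set $X=\{0,1\}^D$ (sequences $x=(x_1,\ldots,x_D)$), two vertices adjacent iff they differ in exactly one coordinate. Matrices are real with rows and columns indexed by $X$ and act on $V=\mathbb{R}^X$. For $1\le i\le D$, $\alpha^*_i$ is the diagonal matrix with $(x,x)$-entry $1$ if $x_i=0$ and $-1$ if $x_i=1$. For $S\subseteq\{1,\ldots,D\}$, $w_S\in V$ is the vector with $x$-entry $2^{-D/2}\prod_{k\in S}(-1)^{x_k}$ (equivalently $w_S=w_1\otimes\cdots\otimes w_D$ with $w_k=u=\tfrac1{\sqrt2}(1,1)^t$ if $k\notin S$ and $w_k=v=\tfrac1{\sqrt2}(1,-1)^t$ if $k\in S$, under the identification $\mathbb{R}^X=(\mathbb{R}^{\{0,1\}})^{\otimes D}$). *)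

theory Defs
  imports Complex_Main
begin

text \<open>Vertices of Q_D: sequences x = (x_1,...,x_D) in {0,1}^D, represented as
  functions nat => nat with values in {0,1} on {1..D} and 0 elsewhere.
  Vectors in R^X are functions on vertices (only values on X matter);
  matrices are functions X => X => real.\<close>

definition hcube :: "nat \<Rightarrow> (nat \<Rightarrow> nat) set" where
  "hcube D = {x. (\<forall>k\<in>{1..D}. x k \<in> {0,1}) \<and> (\<forall>k. k \<notin> {1..D} \<longrightarrow> x k = 0)}"

definition hadj :: "nat \<Rightarrow> (nat \<Rightarrow> nat) \<Rightarrow> (nat \<Rightarrow> nat) \<Rightarrow> real" where
  "hadj D x y = (if card {k\<in>{1..D}. x k \<noteq> y k} = 1 then 1 else 0)"

definition alpha_star :: "nat \<Rightarrow> (nat \<Rightarrow> nat) \<Rightarrow> (nat \<Rightarrow> nat) \<Rightarrow> real" where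
  "alpha_star i x y = (if x = y then (if x i = 0 then 1 else -1) else 0)"

definition mmul :: "nat \<Rightarrow> ((nat \<Rightarrow> nat) \<Rightarrow> (nat \<Rightarrow> nat) \<Rightarrow> real)
    \<Rightarrow> ((nat \<Rightarrow> nat) \<Rightarrow> (nat \<Rightarrow> nat) \<Rightarrow> real) \<Rightarrow> (nat \<Rightarrow> nat) \<Rightarrow> (nat \<Rightarrow> nat) \<Rightarrow> real" where
  "mmul D M N x y = (\<Sum>z\<in>hcube D. M x z * N z y)"

definition mvec :: "nat \<Rightarrow> ((nat \<Rightarrow> nat) \<Rightarrow> (nat \<Rightarrow> nat) \<Rightarrow> real)
    \<Rightarrow> ((nat \<Rightarrow> nat) \<Rightarrow> real) \<Rightarrow> (nat \<Rightarrow> nat) \<Rightarrow> real" where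
  "mvec D M v x = (\<Sum>y\<in>hcube D. M x y * v y)"

definition Bmat :: "nat \<Rightarrow> nat \<Rightarrow> nat \<Rightarrow> (nat \<Rightarrow> nat) \<Rightarrow> (nat \<Rightarrow> nat) \<Rightarrow> real" where
  "Bmat D i j x y = mmul D (mmul D (alpha_star i) (hadj D)) (alpha_star j) x y
                  - mmul D (mmul D (alpha_star j) (hadj D)) (alpha_star i) x y"

definition wvec :: "nat \<Rightarrow> nat set \<Rightarrow> (nat \<Rightarrow> nat) \<Rightarrow> real" where
  "wvec D S x = 2 powr (- real D / 2) * (\<Prod>k\<in>S. (-1) ^ (x k))"

end

theory Submission
  imports Defs "HOL-Library.FuncSet"
begin

definition flip :: "nat \<Rightarrow> (nat \<Rightarrow> nat) \<Rightarrow> (nat \<Rightarrow> nat)" where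
  "flip k x = x(k := 1 - x k)"

definition av :: "nat \<Rightarrow> (nat \<Rightarrow> nat) \<Rightarrow> real" where
  "av i x = (if x i = 0 then 1 else -1)"

lemma finite_hcube: "finite (hcube D)"
proof -
  have "hcube D \<subseteq> (\<lambda>g k. if k \<in> {1..D} then g k else 0) ` ({1..D} \<rightarrow>\<^sub>E {0::nat,1})"
  proof
    fix x assume x: "x \<in> hcube D"
    let ?g = "restrict x {1..D}"
    have "?g \<in> {1..D} \<rightarrow>\<^sub>E {0,1}" using x unfolding hcube_def by auto
    moreover have "x = (\<lambda>k. if k \<in> {1..D} then ?g k else 0)"
      using x unfolding hcube_def by (auto simp: fun_eq_iff)
    ultimately show "x \<in> (\<lambda>g k. if k \<in> {1..D} then g k else 0) ` ({1..D} \<rightarrow>\<^sub>E {0::nat,1})"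
      by blast
  qed
  moreover have "finite ({1..D} \<rightarrow>\<^sub>E {0::nat,1})" by (rule finite_PiE) auto
  ultimately show ?thesis by (meson finite_imageI finite_subset)
qed

lemma mmul_left:
  "mmul D (alpha_star i) M x y = (if x \<in> hcube D then av i x * M x y else 0)"
proof -
  have "mmul D (alpha_star i) M x y = (\<Sum>z\<in>hcube D. if x = z then av i x * M x y else 0)"
    unfolding mmul_def alpha_star_def av_def by (rule sum.cong) auto
  also have "\<dots> = (if x \<in> hcube D then av i x * M x y else 0)"
    using finite_hcube by (simp add: sum.delta)
  finally show ?thesis .
qed

lemma mmul_right:
  "mmul D M (alpha_star i) x y = (if y \<in> hcube D then M x y * av i y else 0)"
proof -
  have "mmul D M (alpha_star i) x y = (\<Sum>z\<in>hcube D. if z = y then M x y * av i y else 0)"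
    unfolding mmul_def alpha_star_def av_def by (rule sum.cong) auto
  also have "\<dots> = (if y \<in> hcube D then M x y * av i y else 0)"
    using finite_hcube by (simp add: sum.delta')
  finally show ?thesis .
qed

lemma Bmat_eq:
  assumes "x \<in> hcube D" "y \<in> hcube D"
  shows "Bmat D i j x y = hadj D x y * (av i x * av j y - av j x * av i y)"
  using assms unfolding Bmat_def mmul_right mmul_left by (simp add: algebra_simps)

lemma flip_in: "x \<in> hcube D \<Longrightarrow> k \<in> {1..D} \<Longrightarrow> flip k x \<in> hcube D"
  unfolding hcube_def flip_def by auto

lemma hadj_flip:
  assumes "k \<in> {1..D}"
  shows "hadj D x (flip k x) = 1"
proof -
  have "x k \<noteq> 1 - x k" by arith
  hence "{m\<in>{1..D}. x m \<noteq> flip k x m} = {k}" using assms by (auto simp: flip_def)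
  thus ?thesis unfolding hadj_def by simp
qed

lemma hadj_zero:
  assumes x: "x \<in> hcube D" and y: "y \<in> hcube D" and ny: "y \<notin> (\<lambda>k. flip k x) ` {1..D}"
  shows "hadj D x y = 0"
proof (rule ccontr)
  assume "hadj D x y \<noteq> 0"
  hence "card {m\<in>{1..D}. x m \<noteq> y m} = 1" unfolding hadj_def by (auto split: if_splits)
  then obtain k where k: "{m\<in>{1..D}. x m \<noteq> y m} = {k}" by (auto simp: card_Suc_eq)
  hence kD: "k \<in> {1..D}" and ne: "x k \<noteq> y k" by auto
  have "y = flip k x"
  proof
    fix m
    show "y m = flip k x m"
    proof (cases "m = k")
      case True
      have "x k \<in> {0,1}" "y k \<in> {0,1}" using x y kD unfolding hcube_def by auto
      thus ?thesis using True ne unfolding flip_def by auto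
    next
      case False
      show ?thesis
      proof (cases "m \<in> {1..D}")
        case True
        hence "x m = y m" using k False by blast
        thus ?thesis using False by (simp add: flip_def)
      next
        case f2: False
        thus ?thesis using x y False unfolding hcube_def flip_def by auto
      qed
    qed
  qed
  thus False using ny kD by blast
qed

lemma flip_inj: "inj_on (\<lambda>k. flip k x) A"
proof (rule inj_onI)
  fix k m assume "flip k x = flip m x"
  hence "flip k x k = flip m x k" by simp
  show "k = m"
  proof (rule ccontr)
    assume "k \<noteq> m"
    with \<open>flip k x k = flip m x k\<close> have "1 - x k = x k" unfolding flip_def by simp
    thus False by arith
  qed
qed

lemma nbr_sum:
  assumes x: "x \<in> hcube D"
  shows "(\<Sum>y\<in>hcube D. hadj D x y * f y) = (\<Sum>k\<in>{1..D}. f (flip k x))"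
proof -
  have sub: "(\<lambda>k. flip k x) ` {1..D} \<subseteq> hcube D" using flip_in x by blast
  have "(\<Sum>y\<in>hcube D. hadj D x y * f y) = (\<Sum>y\<in>(\<lambda>k. flip k x) ` {1..D}. hadj D x y * f y)"
    by (rule sum.mono_neutral_right[OF finite_hcube sub]) (use hadj_zero x in auto)
  also have "\<dots> = (\<Sum>k\<in>{1..D}. hadj D x (flip k x) * f (flip k x))"
    by (rule sum.reindex[OF flip_inj, unfolded comp_def])
  also have "\<dots> = (\<Sum>k\<in>{1..D}. f (flip k x))"
    by (rule sum.cong) (auto simp: hadj_flip)
  finally show ?thesis .
qed

lemma pow_flip: "n \<le> 1 \<Longrightarrow> (-1::real) ^ (1 - n) = - ((-1) ^ n)"
  by (cases n) auto

lemma wvec_flip: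
  assumes "finite S" "x k \<le> 1"
  shows "wvec D S (flip k x) = (if k \<in> S then -1 else 1) * wvec D S x"
proof (cases "k \<in> S")
  case False
  have "(\<Prod>m\<in>S. (-1::real) ^ (flip k x m)) = (\<Prod>m\<in>S. (-1) ^ (x m))"
    by (rule prod.cong) (use False in \<open>auto simp: flip_def\<close>)
  thus ?thesis using False unfolding wvec_def by simp
next
  case True
  have a: "(\<Prod>m\<in>S. (-1::real) ^ (flip k x m)) = (-1) ^ (flip k x k) * (\<Prod>m\<in>S-{k}. (-1) ^ (flip k x m))"
    using True assms by (simp add: prod.remove)
  have b: "(\<Prod>m\<in>S. (-1::real) ^ (x m)) = (-1) ^ (x k) * (\<Prod>m\<in>S-{k}. (-1) ^ (x m))"
    using True assms by (simp add: prod.remove)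
  have c: "(\<Prod>m\<in>S-{k}. (-1::real) ^ (flip k x m)) = (\<Prod>m\<in>S-{k}. (-1) ^ (x m))"
    by (rule prod.cong) (auto simp: flip_def)
  have d: "(-1::real) ^ (flip k x k) = - ((-1) ^ x k)"
    unfolding flip_def fun_upd_same by (rule pow_flip[OF assms(2)])
  show ?thesis using True unfolding wvec_def a b c d by simp
qed

lemma av_flip_same: "x k \<le> 1 \<Longrightarrow> av k (flip k x) = - av k x"
  unfolding av_def flip_def by auto

lemma av_flip_other: "m \<noteq> k \<Longrightarrow> av m (flip k x) = av m x"
  unfolding av_def flip_def by auto

lemma av_pow: "x k \<le> 1 \<Longrightarrow> av k x = (-1) ^ (x k)"
  unfolding av_def by (cases "x k") auto

theorem lemma9p6:
  fixes D i j :: nat and S :: "nat set"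
  assumes "D \<ge> 1" and "1 \<le> i" and "i < j" and "j \<le> D" and "S \<subseteq> {1..D}"
  shows "\<forall>x\<in>hcube D. mvec D (Bmat D i j) (wvec D S) x =
    (if i \<in> S \<and> j \<notin> S then - 4 * wvec D ((S \<union> {j}) - {i}) x
     else if i \<notin> S \<and> j \<in> S then 4 * wvec D ((S \<union> {i}) - {j}) x
     else 0)"
proof
  fix x assume x: "x \<in> hcube D"
  have fS: "finite S" using assms(5) finite_subset by blast
  have xle: "\<And>k. x k \<le> 1"
  proof -
    fix k show "x k \<le> 1" using x unfolding hcube_def by (cases "k \<in> {1..D}") fastforce+
  qed
  have ij: "i \<noteq> j" using assms by simp
  define g where "g y = (av i x * av j y - av j x * av i y) * wvec D S y" for y
  have "mvec D (Bmat D i j) (wvec D S) x = (\<Sum>y\<in>hcube D. hadj D x y * g y)"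
    unfolding mvec_def g_def by (rule sum.cong) (use x Bmat_eq in auto)
  also have "\<dots> = (\<Sum>k\<in>{1..D}. g (flip k x))" by (rule nbr_sum[OF x])
  also have "\<dots> = (\<Sum>k\<in>{i,j}. g (flip k x))"
  proof (rule sum.mono_neutral_right)
    show "{i, j} \<subseteq> {1..D}" using assms by auto
    show "\<forall>k\<in>{1..D} - {i, j}. g (flip k x) = 0"
      unfolding g_def by (auto simp: av_flip_other)
  qed simp
  also have "\<dots> = g (flip i x) + g (flip j x)" using ij by simp
  also have "\<dots> = 2 * av i x * av j x * ((if i \<in> S then -1 else 1) - (if j \<in> S then -1 else 1)) * wvec D S x"
  proof -
    have e1: "g (flip i x) = (av i x * av j x + av j x * av i x) * ((if i \<in> S then -1 else 1) * wvec D S x)"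
      unfolding g_def using av_flip_same[of x i, OF xle] av_flip_other[of j i x] ij
        wvec_flip[OF fS, of x i, OF xle] by simp
    have e2: "g (flip j x) = (- av i x * av j x - av j x * av i x) * ((if j \<in> S then -1 else 1) * wvec D S x)"
      unfolding g_def using av_flip_same[of x j, OF xle] av_flip_other[of i j x] ij
        wvec_flip[OF fS, of x j, OF xle] by simp
    show ?thesis unfolding e1 e2 by (simp add: algebra_simps)
  qed
  finally have main: "mvec D (Bmat D i j) (wvec D S) x = \<dots>" .
  show "mvec D (Bmat D i j) (wvec D S) x =
    (if i \<in> S \<and> j \<notin> S then - 4 * wvec D ((S \<union> {j}) - {i}) x
     else if i \<notin> S \<and> j \<in> S then 4 * wvec D ((S \<union> {i}) - {j}) x
     else 0)"
  proof -
    let ?P = "\<lambda>T. (\<Prod>m\<in>T. (-1::real) ^ (x m))"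
    have sq: "\<And>k. ((-1::real) ^ x k) * ((-1) ^ x k) = 1"
      by (simp add: power_mult_distrib[symmetric])
    have c1: "i \<in> S \<Longrightarrow> j \<notin> S \<Longrightarrow> av i x * av j x * wvec D S x = wvec D ((S \<union> {j}) - {i}) x"
    proof -
      assume iS: "i \<in> S" and jS: "j \<notin> S"
      have e: "(S \<union> {j}) - {i} = insert j (S - {i})" using ij by auto
      have h1: "?P S = (-1)^(x i) * ?P (S - {i})" using iS fS by (simp add: prod.remove)
      have h2: "?P (insert j (S - {i})) = (-1)^(x j) * ?P (S - {i})" using jS fS by simp
      define A where "A = ((-1::real)^(x i))"
      define B where "B = ((-1::real)^(x j))"
      define R where "R = ?P (S - {i})"
      define c where "c = (2::real) powr (- real D / 2)"
      have "A * B * (c * (A * R)) = (A * A) * (c * (B * R))" by (simp add: ac_simps)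
      also have "\<dots> = c * (B * R)" using sq[of i] unfolding A_def by simp
      finally show ?thesis unfolding wvec_def e av_pow[of x i, OF xle] av_pow[of x j, OF xle] h1 h2
        A_def[symmetric] B_def[symmetric] R_def[symmetric] c_def[symmetric] .
    qed
    have c2: "i \<notin> S \<Longrightarrow> j \<in> S \<Longrightarrow> av i x * av j x * wvec D S x = wvec D ((S \<union> {i}) - {j}) x"
    proof -
      assume iS: "i \<notin> S" and jS: "j \<in> S"
      have e: "(S \<union> {i}) - {j} = insert i (S - {j})" using ij by auto
      have h1: "?P S = (-1)^(x j) * ?P (S - {j})" using jS fS by (simp add: prod.remove)
      have h2: "?P (insert i (S - {j})) = (-1)^(x i) * ?P (S - {j})" using iS fS by simp
      define A where "A = ((-1::real)^(x i))"
      define B where "B = ((-1::real)^(x j))"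
      define R where "R = ?P (S - {j})"
      define c where "c = (2::real) powr (- real D / 2)"
      have "A * B * (c * (B * R)) = (B * B) * (c * (A * R))" by (simp add: ac_simps)
      also have "\<dots> = c * (A * R)" using sq[of j] unfolding B_def by simp
      finally show ?thesis unfolding wvec_def e av_pow[of x i, OF xle] av_pow[of x j, OF xle] h1 h2
        A_def[symmetric] B_def[symmetric] R_def[symmetric] c_def[symmetric] .
    qed
    show ?thesis
    proof (cases "i \<in> S")
      case iS: True
      show ?thesis
      proof (cases "j \<in> S")
        case True thus ?thesis using iS unfolding main by simp
      next
        case False
        have "mvec D (Bmat D i j) (wvec D S) x = - 4 * (av i x * av j x * wvec D S x)"
          unfolding main using iS False by simp
        thus ?thesis using c1[OF iS False] iS False by simp
      qed
    next
      case iS: False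
      show ?thesis
      proof (cases "j \<in> S")
        case False thus ?thesis using iS unfolding main by simp
      next
        case True
        have "mvec D (Bmat D i j) (wvec D S) x = 4 * (av i x * av j x * wvec D S x)"
          unfolding main using iS True by simp
        thus ?thesis using c2[OF iS True] iS True by simp
      qed
    qed
  qed
qed

end
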